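(* Let $n$ and $k$ be even positive integers with $n>k$. Then $\mathrm{msum}(n,k)=1$.
   Context: Let $n,k$ be positive integers with $n>k$ and let $S_n$ be the set of permutations $\pi=(\pi_1,\dots,\pi_n)$ of $1,\dots,n$. Indices are taken cyclically: $\pi_{n+i}=\pi_i$. The $k$-consecutive sums of $\pi$ are $s_i=\sum_{j=0}^{k-1}\pi_{i+j}$ for $i=1,\dots,n$. Define $\mathrm{msum}(\pi,k)=\max\{s_i: 1\le i\le n\}-\frac{k(n+1)}{2}$ and $\mathrm{msum}(n,k)=\min\{\mathrm{msum}(\pi,k):\pi\in S_n\}$. *)

theory Defs
  imports "HOL-Combinatorics.Permutations" Complex_Main
begin

text \<open>A permutation pi of 1..n is represented by a bijection p of {1..n}
  (p permutes {1..n}), with pi_i = p i. Cyclic index: pi_{n+i} = pi_i.\<close>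

definition cyc :: "nat \<Rightarrow> (nat \<Rightarrow> nat) \<Rightarrow> nat \<Rightarrow> nat" where
  "cyc n p i = p (((i - 1) mod n) + 1)"

definition ksum :: "nat \<Rightarrow> nat \<Rightarrow> (nat \<Rightarrow> nat) \<Rightarrow> nat \<Rightarrow> nat" where
  "ksum n k p i = (\<Sum>j<k. cyc n p (i + j))"

definition msum_perm :: "nat \<Rightarrow> nat \<Rightarrow> (nat \<Rightarrow> nat) \<Rightarrow> real" where
  "msum_perm n k p = real (Max {ksum n k p i | i. i \<in> {1..n}}) - real k * (real n + 1) / 2"

definition msum :: "nat \<Rightarrow> nat \<Rightarrow> real" where
  "msum n k = Min {msum_perm n k p | p. p permutes {1..n}}"

end

theory Submission
  imports Defs "HOL-Number_Theory.Cong"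
begin


definition fF :: "nat \<Rightarrow> nat \<Rightarrow> nat \<Rightarrow> nat \<Rightarrow> nat" where
  "fF g d u t = (t mod g)*d + (d - 1 - ((t div g)*u) mod d)"

lemma fF_lt: assumes "g > 0" "d > 0" shows "fF g d u t < g*d"
proof -
  have "t mod g + 1 \<le> g" using assms by (simp add: Suc_leI)
  hence "(t mod g + 1)*d \<le> g*d" by (rule mult_le_mono1)
  thus ?thesis unfolding fF_def using assms by (simp add: algebra_simps)
qed

lemma fF_per: assumes "g > 0" "m = d*g" shows "fF g d u (t+m) = fF g d u t"
proof -
  have a: "(t+m) mod g = t mod g" using assms by simp
  have b: "(t+m) div g = t div g + d" using assms by simp
  have c: "((t div g + d)*u) mod d = ((t div g)*u) mod d"
    by (simp add: algebra_simps)
  show ?thesis unfolding fF_def a b c ..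
qed

lemma fF_step: assumes "g > 0" "d > 0" "l = l'*g" "(l'*u) mod d = 1 mod d"
  shows "fF g d u t \<le> fF g d u (t+l) + 1"
proof -
  have a: "(t+l) mod g = t mod g" using assms by simp
  have b: "(t+l) div g = t div g + l'" using assms by simp
  define Q where "Q = ((t div g)*u) mod d"
  have "((t div g + l')*u) mod d = (Q + (l'*u) mod d) mod d"
    unfolding Q_def by (simp add: algebra_simps mod_add_eq)
  also have "\<dots> = (Q + 1) mod d" by (simp only: assms(4) mod_add_right_eq)
  finally have c: "((t div g + l')*u) mod d = (Q+1) mod d" .
  have Qd: "Q < d" unfolding Q_def using assms by simp
  show ?thesis
  proof (cases "Q + 1 < d")
    case True
    then show ?thesis unfolding fF_def a b c using Q_def by simp
  next
    case False
    then have "Q + 1 = d" using Qd by simp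
    then show ?thesis unfolding fF_def a b c using Q_def by simp
  qed
qed

lemma fF_inj: assumes "g > 0" "d > 0" "[l'*u = 1] (mod d)" "t1 < g*d" "t2 < g*d"
  "fF g d u t1 = fF g d u t2" shows "t1 = t2"
proof -
  define Q1 where "Q1 = ((t1 div g)*u) mod d"
  define Q2 where "Q2 = ((t2 div g)*u) mod d"
  have q1: "Q1 < d" "Q2 < d" unfolding Q1_def Q2_def using assms by auto
  have e1: "fF g d u t1 = (t1 mod g)*d + (d - 1 - Q1)" unfolding fF_def Q1_def ..
  have e2: "fF g d u t2 = (t2 mod g)*d + (d - 1 - Q2)" unfolding fF_def Q2_def ..
  have lt1: "d - 1 - Q1 < d" "d - 1 - Q2 < d" using assms by auto
  have "fF g d u t1 div d = t1 mod g" unfolding e1 using lt1 assms by simp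
  moreover have "fF g d u t2 div d = t2 mod g" unfolding e2 using lt1 assms by simp
  ultimately have r: "t1 mod g = t2 mod g" using assms by simp
  have "fF g d u t1 mod d = d - 1 - Q1" unfolding e1 using lt1 assms by simp
  moreover have "fF g d u t2 mod d = d - 1 - Q2" unfolding e2 using lt1 assms by simp
  ultimately have "d - 1 - Q1 = d - 1 - Q2" using assms by simp
  hence "Q1 = Q2" using q1 by simp
  hence "[(t1 div g)*u = (t2 div g)*u] (mod d)" unfolding Q1_def Q2_def cong_def .
  hence h: "[(t1 div g)*u*l' = (t2 div g)*u*l'] (mod d)" by (rule cong_mult) (rule cong_refl)
  have k1: "[(t1 div g)*u*l' = (t1 div g)] (mod d)"
    using cong_mult[OF cong_refl[of "t1 div g"] assms(3)] by (simp add: algebra_simps)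
  have k2: "[(t2 div g)*u*l' = (t2 div g)] (mod d)"
    using cong_mult[OF cong_refl[of "t2 div g"] assms(3)] by (simp add: algebra_simps)
  have "[t1 div g = t2 div g] (mod d)"
    using cong_trans[OF cong_trans[OF cong_sym[OF k1] h] k2] .
  moreover have "t1 div g < d" "t2 div g < d" using assms by (auto simp: div_less_iff_less_mult mult.commute)
  ultimately have "t1 div g = t2 div g" by (simp add: cong_def)
  thus ?thesis using r by (metis div_mult_mod_eq)
qed


definition FF :: "nat \<Rightarrow> nat \<Rightarrow> nat \<Rightarrow> nat \<Rightarrow> nat \<Rightarrow> nat" where
  "FF m g d u y = (if even y then m - fF g d u (y div 2) else m + 1 + fF g d u (y div 2))"

lemma FF_per: assumes "g > 0" "m = d*g" shows "FF m g d u (y + 2*m) = FF m g d u y"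
proof -
  have e: "(y + 2*m) div 2 = y div 2 + m" by simp
  have "fF g d u (y div 2 + m) = fF g d u (y div 2)" by (rule fF_per[OF assms])
  thus ?thesis unfolding FF_def e by simp
qed

lemma FF_mod: assumes "g > 0" "m = d*g" shows "FF m g d u (y mod (2*m)) = FF m g d u y"
proof -
  have "FF m g d u (z + q*(2*m)) = FF m g d u z" for z q
  proof (induction q)
    case (Suc q)
    have "FF m g d u (z + Suc q*(2*m)) = FF m g d u ((z + q*(2*m)) + 2*m)" by (simp add: algebra_simps)
    also have "\<dots> = FF m g d u z" using Suc FF_per[OF assms, where y="z + q*(2*m)" and u=u] by simp
    finally show ?case .
  qed simp
  from this[of "y mod (2*m)" "y div (2*m)"] show ?thesis by (metis mod_div_mult_eq)
qed

lemma FF_range: assumes "g > 0" "d > 0" "m = g*d" shows "1 \<le> FF m g d u y \<and> FF m g d u y \<le> 2*m"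
  using fF_lt[OF assms(1,2), of u "y div 2"] assms unfolding FF_def by (auto simp: mult.commute)

lemma FF_inj: assumes "g > 0" "d > 0" "m = g*d" "[l'*u = 1] (mod d)" "y1 < 2*m" "y2 < 2*m"
  "FF m g d u y1 = FF m g d u y2" shows "y1 = y2"
proof -
  have l1: "fF g d u (y1 div 2) < m" "fF g d u (y2 div 2) < m" using fF_lt assms by auto
  have par: "even y1 \<longleftrightarrow> even y2"
  proof -
    have "even y \<longleftrightarrow> FF m g d u y \<le> m" for y using fF_lt[OF assms(1,2), of u "y div 2"] assms unfolding FF_def by auto
    thus ?thesis using assms(7) by metis
  qed
  have "fF g d u (y1 div 2) = fF g d u (y2 div 2)"
    using assms(7) par l1 unfolding FF_def by (auto split: if_splits)
  hence "y1 div 2 = y2 div 2" by (rule fF_inj[OF assms(1,2,4), rotated 2]) (use assms in auto)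
  thus ?thesis using par by (metis div_mult_mod_eq parity_cases)
qed

lemma sum_pairs: "(\<Sum>j<2*(l::nat). h j) = (\<Sum>i<l. h (2*i) + h (2*i+1))"
  by (induction l) (simp_all add: add.assoc)

lemma sum_shift1: "(\<Sum>j<(K::nat). h (a+j)) + h (a+K) = h a + (\<Sum>j<K. h (a+1+j))"
proof -
  have "(\<Sum>j<Suc K. h (a+j)) = h a + (\<Sum>j<K. h (a+Suc j))"
    using sum.lessThan_Suc_shift[of "\<lambda>j. h (a+j)" K] by simp
  thus ?thesis by simp
qed

lemma W_even: assumes "g > 0" "d > 0" "m = g*d"
  shows "(\<Sum>j<2*l. FF m g d u (2*t+j)) = l*(2*m+1)"
proof -
  have "(\<Sum>j<2*l. FF m g d u (2*t+j)) = (\<Sum>i<l. FF m g d u (2*t+2*i) + FF m g d u (2*t+(2*i+1)))"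
    by (rule sum_pairs)
  also have "\<dots> = (\<Sum>i<l. 2*m+1)"
  proof (rule sum.cong)
    fix i
    have e1: "(2*t+2*i) div 2 = t+i" "(2*t+(2*i+1)) div 2 = t+i" by auto
    have "fF g d u (t+i) < m" using fF_lt assms by auto
    thus "FF m g d u (2*t+2*i) + FF m g d u (2*t+(2*i+1)) = 2*m+1"
      unfolding FF_def e1 by simp
  qed simp
  finally show ?thesis by simp
qed

lemma W_odd: assumes "g > 0" "d > 0" "m = g*d" "l = l'*g" "(l'*u) mod d = 1 mod d"
  shows "(\<Sum>j<2*l. FF m g d u (2*t+1+j)) \<le> l*(2*m+1) + 1"
proof -
  have s: "(\<Sum>j<2*l. FF m g d u (2*t+1+j)) + FF m g d u (2*t+1+2*l)
     = FF m g d u (2*t+1) + (\<Sum>j<2*l. FF m g d u (2*(t+1)+j))"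
    using sum_shift1[of "FF m g d u" "2*t+1" "2*l"] by (simp add: add.assoc)
  have e1: "(2*t+1+2*l) div 2 = t + l" "(2*t+1) div 2 = t" by auto
  have "FF m g d u (2*t+1+2*l) = m+1+fF g d u (t+l)" "FF m g d u (2*t+1) = m+1+fF g d u t"
    unfolding FF_def e1 by auto
  moreover have "fF g d u t \<le> fF g d u (t+l) + 1" by (rule fF_step[OF assms(1,2,4,5)])
  ultimately show ?thesis using s W_even[OF assms(1-3), where l=l and t="t+1" and u=u] by linarith
qed



lemma gauss2: "2 * (\<Sum>x\<in>{1..n::nat}. x) = n*(n+1)"
  by (induction n) (auto simp: algebra_simps)

lemma periodic_sum_shift:
  fixes n j :: nat
  assumes per: "\<And>y. h (y + n) = (h y :: nat)"
  shows "(\<Sum>y<n. h (y+j)) = (\<Sum>y<n. h y)"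
proof (induction j)
  case (Suc j)
  have "(\<Sum>y<Suc n. h (y+j)) = h j + (\<Sum>y<n. h (Suc y + j))"
    using sum.lessThan_Suc_shift[of "\<lambda>y. h (y+j)" n] by simp
  moreover have "(\<Sum>y<Suc n. h (y+j)) = (\<Sum>y<n. h (y+j)) + h (n+j)" by simp
  moreover have "h (n+j) = h j" using per[of j] by (simp add: add.commute)
  ultimately show ?case using Suc by simp
qed simp

lemma cyc_sum:
  assumes "p permutes {1..n}" "n > 0"
  shows "(\<Sum>i\<in>{1..n}. cyc n p (i+j)) = (\<Sum>x\<in>{1..n}. x)"
proof -
  define h where "h y = p ((y mod n) + 1)" for y
  have per: "h (y + n) = h y" for y unfolding h_def by simp
  have "(\<Sum>i\<in>{1..n}. cyc n p (i+j)) = (\<Sum>y<n. cyc n p (Suc y + j))"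
    using sum.atLeast1_atMost_eq[of "\<lambda>i. cyc n p (i+j)" n] by simp
  also have "\<dots> = (\<Sum>y<n. h (y+j))" unfolding h_def cyc_def by simp
  also have "\<dots> = (\<Sum>y<n. h y)" by (rule periodic_sum_shift) (rule per)
  also have "\<dots> = (\<Sum>y<n. p (Suc y))" unfolding h_def by simp
  also have "\<dots> = (\<Sum>x\<in>{1..n}. p x)"
    using sum.atLeast1_atMost_eq[of p n] by simp
  also have "\<dots> = (\<Sum>x\<in>{1..n}. x)"
  proof -
    have "(\<Sum>x\<in>p ` {1..n}. x) = (\<Sum>x\<in>{1..n}. p x)"
      using sum.reindex[OF permutes_inj_on[OF assms(1)], of "\<lambda>x. x"] by simp
    thus ?thesis using permutes_image[OF assms(1)] by simp
  qed
  finally show ?thesis .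
qed

lemma lower:
  assumes "p permutes {1..n}" "n = 2*m" "k = 2*l" "0 < k" "k < n"
  shows "Max {ksum n k p i | i. i \<in> {1..n}} \<ge> l*(n+1) + 1"
proof (rule ccontr)
  assume H: "\<not> ?thesis"
  define L where "L = l*(n+1)"
  have S: "{ksum n k p i | i. i \<in> {1..n}} = (\<lambda>i. ksum n k p i) ` {1..n}" by auto
  have fin: "finite {ksum n k p i | i. i \<in> {1..n}}" unfolding S by simp
  have le: "ksum n k p i \<le> L" if "i \<in> {1..n}" for i
  proof -
    have "ksum n k p i \<le> Max {ksum n k p i | i. i \<in> {1..n}}"
      by (rule Max_ge[OF fin]) (use that in auto)
    thus ?thesis using H unfolding L_def by simp
  qed
  have tot: "(\<Sum>i\<in>{1..n}. ksum n k p i) = n * L"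
  proof -
    have "(\<Sum>i\<in>{1..n}. ksum n k p i) = (\<Sum>j<k. \<Sum>i\<in>{1..n}. cyc n p (i+j))"
      unfolding ksum_def by (rule sum.swap)
    also have "\<dots> = k * (\<Sum>x\<in>{1..n}. x)" using cyc_sum[OF assms(1)] assms by simp
    finally have "2 * (\<Sum>i\<in>{1..n}. ksum n k p i) = k * (2 * (\<Sum>x\<in>{1..n}. x))" by simp
    also have "\<dots> = 2 * (n * L)" unfolding gauss2 L_def assms(3) by (simp add: algebra_simps)
    finally show ?thesis by simp
  qed
  have sh: "ksum n k p 1 + cyc n p (1+k) = cyc n p 1 + ksum n k p 2"
    unfolding ksum_def using sum_shift1[of "cyc n p" 1 k] by (simp add: add.commute)
  have c1: "cyc n p 1 = p 1" unfolding cyc_def by simp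
  have c2: "cyc n p (1+k) = p (k+1)" unfolding cyc_def using assms by simp
  have "p (k+1) \<noteq> p 1" using inj_eq[OF permutes_inj[OF assms(1)], of "k+1" 1] assms by simp
  hence ne: "ksum n k p 1 \<noteq> ksum n k p 2" using sh c1 c2 by auto
  have in12: "1 \<in> {1..n}" "2 \<in> {1..n}" using assms by auto
  obtain a where a: "a \<in> {1..n}" "ksum n k p a < L"
    using ne le[OF in12(1)] le[OF in12(2)] in12 by (metis le_neq_implies_less)
  have "(\<Sum>i\<in>{1..n}. ksum n k p i) < (\<Sum>i\<in>{1..n}. L)"
    by (rule sum_strict_mono_ex1) (use le a in auto)
  thus False using tot by simp
qed



lemma upper:
  assumes "n = 2*m" "k = 2*l" "0 < l" "l < m"
  shows "\<exists>p. p permutes {1..n} \<and> (\<forall>i\<in>{1..n}. ksum n k p i \<le> l*(n+1)+1)"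
proof -
  define g where "g = gcd l m"
  have g0: "g > 0" unfolding g_def using assms by simp
  define d where "d = m div g"
  define l' where "l' = l div g"
  have md: "m = g*d" unfolding d_def g_def by simp
  have ld: "l = l'*g" unfolding l'_def g_def by simp
  have d0: "d > 0" using md assms by (cases d) auto
  have cop: "coprime l' d" unfolding l'_def d_def g_def using div_gcd_coprime[of l m] assms by auto
  obtain u where u: "[l'*u = Suc 0] (mod d)" using cong_solve_coprime_nat[OF cop] by blast
  have u1: "[l'*u = 1] (mod d)" using u by simp
  have u2: "(l'*u) mod d = 1 mod d" using u by (simp add: cong_def)
  define F where "F = FF m g d u"
  define p where "p x = (if x \<in> {1..n} then F (x - 1) else x)" for x
  have perm: "p permutes {1..n}"
  proof (rule inj_imp_permutes)
    show "inj_on p {1..n}"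
    proof (rule inj_onI)
      fix x y assume xy: "x \<in> {1..n}" "y \<in> {1..n}" "p x = p y"
      have "x - 1 = y - 1"
        by (rule FF_inj[OF g0 d0 md u1]) (use xy assms in \<open>auto simp: p_def F_def\<close>)
      thus "x = y" using xy by auto
    qed
    show "p x \<in> {1..n}" if "x \<in> {1..n}" for x
      using that FF_range[OF g0 d0 md, of u "x-1"] assms unfolding p_def F_def by auto
  qed (auto simp: p_def)
  have cyc: "cyc n p i = F (i - 1)" if "i \<ge> 1" for i
  proof -
    have "(i - 1) mod n < n" using assms by simp
    hence "(i - 1) mod n + 1 \<in> {1..n}" by simp
    hence "cyc n p i = F ((i - 1) mod n)" unfolding cyc_def p_def by simp
    also have "\<dots> = F (i - 1)" unfolding F_def assms(1) using FF_mod[OF g0, of m d] md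
      by (simp add: mult.commute)
    finally show ?thesis .
  qed
  have ks: "ksum n k p i = (\<Sum>j<2*l. F (i - 1 + j))" if "i \<ge> 1" for i
    unfolding ksum_def assms(2) using cyc that by (intro sum.cong) auto
  have "ksum n k p i \<le> l*(n+1)+1" if "i \<in> {1..n}" for i
  proof -
    have i1: "i \<ge> 1" using that by simp
    show ?thesis
    proof (cases "even (i - 1)")
      case True
      then obtain t where t: "i - 1 = 2*t" by (rule evenE)
      have "ksum n k p i = (\<Sum>j<2*l. FF m g d u (2*t + j))" using ks[OF i1] t F_def by simp
      also have "\<dots> = l*(2*m+1)" by (rule W_even[OF g0 d0 md])
      finally show ?thesis using assms(1) by simp
    next
      case False
      then obtain t where t: "i - 1 = 2*t+1" using oddE by blast
      have ie: "i - 1 + 0 = 2*t+1" using t by simp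
      have "ksum n k p i = (\<Sum>j<2*l. FF m g d u (2*t + 1 + j))" unfolding ks[OF i1] F_def
        using ie by (intro sum.cong) simp_all
      thus ?thesis using W_odd[OF g0 d0 md ld u2, of t] assms(1) by simp
    qed
  qed
  thus ?thesis using perm by blast
qed

theorem theorem1p2:
  fixes n k :: nat
  assumes "even n" and "even k" and "0 < k" and "k < n"
  shows "msum n k = 1"
proof -
  obtain m where m: "n = 2*m" using assms(1) by auto
  obtain l where l: "k = 2*l" using assms(2) by auto
  have l0: "0 < l" "l < m" using assms m l by auto
  have keq: "real k * (real n + 1) / 2 = real (l*(n+1))" using l by (simp add: algebra_simps)
  have lo: "msum_perm n k p \<ge> 1" if "p permutes {1..n}" for p
    using lower[OF that m l assms(3,4)] unfolding msum_perm_def keq by linarith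
  obtain p where p: "p permutes {1..n}" "\<forall>i\<in>{1..n}. ksum n k p i \<le> l*(n+1)+1"
    using upper[OF m l l0] by blast
  have S: "{ksum n k p i | i. i \<in> {1..n}} = (\<lambda>i. ksum n k p i) ` {1..n}" by auto
  have "Max {ksum n k p i | i. i \<in> {1..n}} \<le> l*(n+1)+1"
    unfolding S using p(2) assms by (subst Max_le_iff) auto
  hence "msum_perm n k p \<le> 1" unfolding msum_perm_def keq by linarith
  hence p1: "msum_perm n k p = 1" using lo[OF p(1)] by simp
  have T: "{msum_perm n k p | p. p permutes {1..n}} = msum_perm n k ` {p. p permutes {1..n}}" by auto
  show ?thesis unfolding msum_def
  proof (rule Min_eqI)
    show "finite {msum_perm n k p | p. p permutes {1..n}}" unfolding T
      by (intro finite_imageI finite_permutations) simp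
    show "\<And>y. y \<in> {msum_perm n k p | p. p permutes {1..n}} \<Longrightarrow> 1 \<le> y" using lo by auto
    show "1 \<in> {msum_perm n k p | p. p permutes {1..n}}" using p(1) p1 by force
  qed
qed

end
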